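(* Let $\alpha$ be an increasing sequence in $\{1,\dots,m\}$. If $a,b\in\mathcal{S}_\alpha$, then the product stream $a\cdot b$ lies in $\mathcal{S}_\alpha$ (in particular it is finite, monotonic and reduced at every level of nesting).
   Context: Fix a semiring $R$, an integer $m\ge1$, and finite nonempty totally ordered sets $I_1,\dots,I_m$; $i::\alpha$ denotes the sequence with head $i$ and tail $\alpha$. An indexed stream of type $I\to V$ is a tuple $(S,q,\iota,\nu,\mathrm{ready},\delta)$: state space $S$, current state $q\in S$, $\iota:S\to I$, $\nu:S\to V$, $\mathrm{ready}:S\to\{\bot,\top\}$, $\delta:S\to S$; "the stream $r$" is the same tuple with current state $r$. $r$ is reachable from $q$ if $r=\delta^k(q)$, $k\ge0$; terminal if $\delta(r)=r$. $q$ is simple if: (Finite) some state reachable from $q$ is terminal and every reachable terminal $t$ has $\mathrm{ready}(t)=\bot$; (Monotonic) $\iota(r)\le\iota(\delta(r))$ for all $r$ reachable from $q$; (Reduced) if $r$ is reachable from $q$, $s$ reachable from $r$, $\mathrm{ready}(r)=\mathrm{ready}(s)=\top$ and $\iota(r)=\iota(s)$, then $r=s$. Nested streams: $\mathcal{S}_{[]}=R$; $\mathcal{S}_{i::\alpha}$ is the collection of simple streams of type $I_i\to\mathcal{S}_\alpha$. Ordering on stream states $a,b$ of the same index type: $a\le b$ iff $\iota(a)<\iota(b)$ or ($\iota(a)=\iota(b)$ and $\mathrm{ready}(a)=\bot$). Product stream: given streams $a,b$ of type $I\to V$ and a multiplication $\cdot:V\times V\to V$, $a\cdot b$ has state space $S_a\times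 S_b$, current state $(a,b)$, and $\iota(a,b)=\max(\iota(a),\iota(b))$, $\nu(a,b)=\nu(a)\cdot\nu(b)$, $\mathrm{ready}(a,b)=\mathrm{ready}(a)\wedge\mathrm{ready}(b)\wedge(\iota(a)=\iota(b))$, and $\delta(a,b)=(\delta(a),b)$ if $a\le b$, otherwise $(a,\delta(b))$. Multiplication on $\mathcal{S}_\alpha$ is defined recursively: on $\mathcal{S}_{[]}=R$ it is the semiring product; on $\mathcal{S}_{i::\alpha}$ it is the product stream using the multiplication of $\mathcal{S}_\alpha$ on values. *)

theory Defs
  imports Main
begin

text \<open>Universal state type: any state space embeds via Atom; product states are Pair.\<close>
datatype 'a st = Atom 'a | Pair "'a st" "'a st"

text \<open>Nested stream values.  Strm S q iota nu ready delta is an indexed stream with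
  state space (carrier) S, current state q.\<close>
datatype ('a, 'i, 'r) nv =
    Scal 'r
  | Strm "'a st set" "'a st" "'a st \<Rightarrow> 'i" "'a st \<Rightarrow> ('a, 'i, 'r) nv"
         "'a st \<Rightarrow> bool" "'a st \<Rightarrow> 'a st"

definition reach :: "('s \<Rightarrow> 's) \<Rightarrow> 's \<Rightarrow> 's \<Rightarrow> bool" where
  "reach \<delta> q r \<longleftrightarrow> (\<exists>k. r = (\<delta> ^^ k) q)"

definition terminal :: "('s \<Rightarrow> 's) \<Rightarrow> 's \<Rightarrow> bool" where
  "terminal \<delta> r \<longleftrightarrow> \<delta> r = r"

definition finite_str :: "('s \<Rightarrow> 's) \<Rightarrow> ('s \<Rightarrow> bool) \<Rightarrow> 's \<Rightarrow> bool" where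
  "finite_str \<delta> rdy q \<longleftrightarrow>
     (\<exists>t. reach \<delta> q t \<and> terminal \<delta> t) \<and>
     (\<forall>t. reach \<delta> q t \<and> terminal \<delta> t \<longrightarrow> \<not> rdy t)"

definition monotonic_str :: "('s \<Rightarrow> 's) \<Rightarrow> ('s \<Rightarrow> 'i::linorder) \<Rightarrow> 's \<Rightarrow> bool" where
  "monotonic_str \<delta> \<iota> q \<longleftrightarrow> (\<forall>r. reach \<delta> q r \<longrightarrow> \<iota> r \<le> \<iota> (\<delta> r))"

definition reduced_str :: "('s \<Rightarrow> 's) \<Rightarrow> ('s \<Rightarrow> 'i) \<Rightarrow> ('s \<Rightarrow> bool) \<Rightarrow> 's \<Rightarrow> bool" where
  "reduced_str \<delta> \<iota> rdy q \<longleftrightarrow>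
     (\<forall>r s. reach \<delta> q r \<and> reach \<delta> r s \<and> rdy r \<and> rdy s \<and> \<iota> r = \<iota> s \<longrightarrow> r = s)"

definition simple_str :: "('s \<Rightarrow> 's) \<Rightarrow> ('s \<Rightarrow> 'i::linorder) \<Rightarrow> ('s \<Rightarrow> bool) \<Rightarrow> 's \<Rightarrow> bool" where
  "simple_str \<delta> \<iota> rdy q \<longleftrightarrow>
     finite_str \<delta> rdy q \<and> monotonic_str \<delta> \<iota> q \<and> reduced_str \<delta> \<iota> rdy q"

primrec inS :: "(nat \<Rightarrow> 'i::linorder set) \<Rightarrow> nat list \<Rightarrow> ('a, 'i, 'r) nv \<Rightarrow> bool" where
  "inS I [] v = (case v of Scal _ \<Rightarrow> True | Strm _ _ _ _ _ _ \<Rightarrow> False)"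
| "inS I (i # \<alpha>) v = (case v of Scal _ \<Rightarrow> False
     | Strm S q \<iota> \<nu> rdy \<delta> \<Rightarrow>
         q \<in> S \<and> (\<forall>s\<in>S. \<delta> s \<in> S \<and> \<iota> s \<in> I i \<and> inS I \<alpha> (\<nu> s))
         \<and> simple_str \<delta> \<iota> rdy q)"

definition st_le :: "('s \<Rightarrow> 'i::linorder) \<Rightarrow> ('s \<Rightarrow> bool) \<Rightarrow> 's \<Rightarrow>
                     ('t \<Rightarrow> 'i) \<Rightarrow> ('t \<Rightarrow> bool) \<Rightarrow> 't \<Rightarrow> bool" where
  "st_le \<iota>a ra a \<iota>b rb b \<longleftrightarrow> \<iota>a a < \<iota>b b \<or> (\<iota>a a = \<iota>b b \<and> \<not> ra a)"

definition prod_str ::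
  "(('a, 'i::linorder, 'r) nv \<Rightarrow> ('a, 'i, 'r) nv \<Rightarrow> ('a, 'i, 'r) nv)
   \<Rightarrow> ('a, 'i, 'r) nv \<Rightarrow> ('a, 'i, 'r) nv \<Rightarrow> ('a, 'i, 'r) nv" where
  "prod_str mul a b = (case (a, b) of
     (Strm Sa qa \<iota>a \<nu>a ra \<delta>a, Strm Sb qb \<iota>b \<nu>b rb \<delta>b) \<Rightarrow>
       Strm {Pair x y | x y. x \<in> Sa \<and> y \<in> Sb} (Pair qa qb)
         (\<lambda>s. case s of Pair x y \<Rightarrow> max (\<iota>a x) (\<iota>b y) | Atom _ \<Rightarrow> undefined)
         (\<lambda>s. case s of Pair x y \<Rightarrow> mul (\<nu>a x) (\<nu>b y) | Atom _ \<Rightarrow> undefined)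
         (\<lambda>s. case s of Pair x y \<Rightarrow> ra x \<and> rb y \<and> \<iota>a x = \<iota>b y | Atom _ \<Rightarrow> undefined)
         (\<lambda>s. case s of Pair x y \<Rightarrow>
                 (if st_le \<iota>a ra x \<iota>b rb y then Pair (\<delta>a x) y else Pair x (\<delta>b y))
               | Atom _ \<Rightarrow> undefined)
   | _ \<Rightarrow> undefined)"

primrec mulS :: "nat list \<Rightarrow> ('a, 'i::linorder, 'r::semiring_1) nv \<Rightarrow> ('a, 'i, 'r) nv \<Rightarrow> ('a, 'i, 'r) nv" where
  "mulS [] a b = (case (a, b) of (Scal x, Scal y) \<Rightarrow> Scal (x * y) | _ \<Rightarrow> undefined)"
| "mulS (i # \<alpha>) a b = prod_str (mulS \<alpha>) a b"

end

theory Submission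
  imports Defs
begin

lemma reach_pair:
  assumes D: "\<And>x y. D (Pair x y) = (if st_le \<iota>a ra x \<iota>b rb y then Pair (\<delta>a x) y else Pair x (\<delta>b y))"
  shows "\<exists>j l. (D ^^ k) (Pair x y) = Pair ((\<delta>a ^^ j) x) ((\<delta>b ^^ l) y)"
proof (induction k)
  case 0 show ?case by (rule exI[of _ 0], rule exI[of _ 0]) simp
next
  case (Suc k)
  then obtain j l where e: "(D ^^ k) (Pair x y) = Pair ((\<delta>a ^^ j) x) ((\<delta>b ^^ l) y)" by blast
  show ?case
  proof (cases "st_le \<iota>a ra ((\<delta>a ^^ j) x) \<iota>b rb ((\<delta>b ^^ l) y)")
    case True
    then have "(D ^^ Suc k) (Pair x y) = Pair ((\<delta>a ^^ Suc j) x) ((\<delta>b ^^ l) y)" using e D by simp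
    then show ?thesis by blast
  next
    case False
    then have "(D ^^ Suc k) (Pair x y) = Pair ((\<delta>a ^^ j) x) ((\<delta>b ^^ Suc l) y)" using e D by simp
    then show ?thesis by blast
  qed
qed

lemma reach_pairE:
  assumes D: "\<And>x y. D (Pair x y) = (if st_le \<iota>a ra x \<iota>b rb y then Pair (\<delta>a x) y else Pair x (\<delta>b y))"
    and "reach D (Pair x y) r"
  shows "\<exists>x' y'. r = Pair x' y' \<and> reach \<delta>a x x' \<and> reach \<delta>b y y'"
proof -
  from assms(2) obtain k where "r = (D ^^ k) (Pair x y)" unfolding reach_def by blast
  with reach_pair[of D \<iota>a ra \<iota>b rb \<delta>a \<delta>b k x y, OF D] show ?thesis
    unfolding reach_def by blast
qed

lemma fin_pair:
  assumes D: "\<And>x y. D (Pair x y) = (if st_le \<iota>a ra x \<iota>b rb y then Pair (\<delta>a x) y else Pair x (\<delta>b y))"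
  shows "na + nb \<le> n \<Longrightarrow> terminal \<delta>a ((\<delta>a ^^ na) x) \<Longrightarrow> terminal \<delta>b ((\<delta>b ^^ nb) y)
     \<Longrightarrow> \<exists>k. terminal D ((D ^^ k) (Pair x y))"
proof (induction n arbitrary: na nb x y)
  case 0
  then have "terminal D (Pair x y)" using D by (auto simp: terminal_def)
  then show ?case by (metis funpow_0)
next
  case (Suc n)
  show ?case
  proof (cases "D (Pair x y) = Pair x y")
    case True
    then show ?thesis by (metis funpow_0 terminal_def)
  next
    case ne: False
    show ?thesis
    proof (cases "st_le \<iota>a ra x \<iota>b rb y")
      case True
      then have Dx: "D (Pair x y) = Pair (\<delta>a x) y" using D by simp
      with ne have "\<delta>a x \<noteq> x" by auto
      then have "na \<noteq> 0" using Suc.prems(2) by (metis funpow_0 terminal_def)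
      then obtain na' where na: "na = Suc na'" by (cases na) auto
      have "terminal \<delta>a ((\<delta>a ^^ na') (\<delta>a x))" using Suc.prems(2) na
        by (simp add: funpow_Suc_right del: funpow.simps)
      then obtain k where "terminal D ((D ^^ k) (Pair (\<delta>a x) y))"
        using Suc.IH[of na' nb "\<delta>a x" y] Suc.prems na by auto
      then have "terminal D ((D ^^ Suc k) (Pair x y))" using Dx
        by (simp add: funpow_Suc_right del: funpow.simps)
      then show ?thesis by blast
    next
      case False
      then have Dx: "D (Pair x y) = Pair x (\<delta>b y)" using D by simp
      with ne have "\<delta>b y \<noteq> y" by auto
      then have "nb \<noteq> 0" using Suc.prems(3) by (metis funpow_0 terminal_def)
      then obtain nb' where nb: "nb = Suc nb'" by (cases nb) auto
      have "terminal \<delta>b ((\<delta>b ^^ nb') (\<delta>b y))" using Suc.prems(3) nb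
        by (simp add: funpow_Suc_right del: funpow.simps)
      then obtain k where "terminal D ((D ^^ k) (Pair x (\<delta>b y)))"
        using Suc.IH[of na nb' x "\<delta>b y"] Suc.prems nb by auto
      then have "terminal D ((D ^^ Suc k) (Pair x y))" using Dx
        by (simp add: funpow_Suc_right del: funpow.simps)
      then show ?thesis by blast
    qed
  qed
qed

lemma prod_simple:
  fixes \<iota>a \<iota>b :: "'a st \<Rightarrow> 'i::linorder"
  assumes D: "\<And>x y. D (Pair x y) = (if st_le \<iota>a ra x \<iota>b rb y then Pair (\<delta>a x) y else Pair x (\<delta>b y))"
    and IO: "\<And>x y. \<iota>p (Pair x y) = max (\<iota>a x) (\<iota>b y)"
    and RD: "\<And>x y. rp (Pair x y) = (ra x \<and> rb y \<and> \<iota>a x = \<iota>b y)"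
    and sa: "simple_str \<delta>a \<iota>a ra qa" and sb: "simple_str \<delta>b \<iota>b rb qb"
  shows "simple_str D \<iota>p rp (Pair qa qb)"
proof -
  note RE = reach_pairE[of D \<iota>a ra \<iota>b rb \<delta>a \<delta>b, OF D]
  have fin: "finite_str D rp (Pair qa qb)"
    unfolding finite_str_def
  proof (intro conjI allI impI)
    from sa obtain ta where "reach \<delta>a qa ta" "terminal \<delta>a ta"
      unfolding simple_str_def finite_str_def by blast
    then obtain na where na: "terminal \<delta>a ((\<delta>a ^^ na) qa)" unfolding reach_def by blast
    from sb obtain tb where "reach \<delta>b qb tb" "terminal \<delta>b tb"
      unfolding simple_str_def finite_str_def by blast
    then obtain nb where nb: "terminal \<delta>b ((\<delta>b ^^ nb) qb)" unfolding reach_def by blast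
    from fin_pair[OF D _ na nb] obtain k where "terminal D ((D ^^ k) (Pair qa qb))" by blast
    then show "\<exists>t. reach D (Pair qa qb) t \<and> terminal D t" unfolding reach_def by blast
  next
    fix t assume t: "reach D (Pair qa qb) t \<and> terminal D t"
    then obtain x y where xy: "t = Pair x y" "reach \<delta>a qa x" "reach \<delta>b qb y"
      using RE by blast
    have "D (Pair x y) = Pair x y" using t xy by (simp add: terminal_def)
    show "\<not> rp t"
    proof (cases "st_le \<iota>a ra x \<iota>b rb y")
      case True
      then have "terminal \<delta>a x" using D \<open>D (Pair x y) = Pair x y\<close> by (simp add: terminal_def)
      then have "\<not> ra x" using sa xy unfolding simple_str_def finite_str_def by blast
      then show ?thesis using RD xy by simp
    next
      case False
      then have "terminal \<delta>b y" using D \<open>D (Pair x y) = Pair x y\<close> by (simp add: terminal_def)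
      then have "\<not> rb y" using sb xy unfolding simple_str_def finite_str_def by blast
      then show ?thesis using RD xy by simp
    qed
  qed
  have mon: "monotonic_str D \<iota>p (Pair qa qb)"
    unfolding monotonic_str_def
  proof (intro allI impI)
    fix r assume "reach D (Pair qa qb) r"
    then obtain x y where xy: "r = Pair x y" "reach \<delta>a qa x" "reach \<delta>b qb y"
      using RE by blast
    have ma: "\<iota>a x \<le> \<iota>a (\<delta>a x)" using sa xy unfolding simple_str_def monotonic_str_def by blast
    have mb: "\<iota>b y \<le> \<iota>b (\<delta>b y)" using sb xy unfolding simple_str_def monotonic_str_def by blast
    show "\<iota>p r \<le> \<iota>p (D r)"
      using ma mb xy D IO by (auto simp: max_def)
  qed
  have red: "reduced_str D \<iota>p rp (Pair qa qb)"
    unfolding reduced_str_def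
  proof (intro allI impI)
    fix r s assume h: "reach D (Pair qa qb) r \<and> reach D r s \<and> rp r \<and> rp s \<and> \<iota>p r = \<iota>p s"
    then obtain x y where xy: "r = Pair x y" "reach \<delta>a qa x" "reach \<delta>b qb y"
      using RE by blast
    with h obtain x' y' where xy': "s = Pair x' y'" "reach \<delta>a x x'" "reach \<delta>b y y'"
      using RE by blast
    from h xy xy' RD IO have c: "ra x" "rb y" "\<iota>a x = \<iota>b y" "ra x'" "rb y'" "\<iota>a x' = \<iota>b y'"
      "\<iota>a x = \<iota>a x'" by auto
    have "x = x'" using sa xy xy' c unfolding simple_str_def reduced_str_def by blast
    moreover have "y = y'" using sb xy xy' c unfolding simple_str_def reduced_str_def by metis
    ultimately show "r = s" using xy xy' by simp
  qed
  show ?thesis using fin mon red unfolding simple_str_def by blast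
qed

theorem mainTheorem5:
  fixes m :: nat
    and I :: "nat \<Rightarrow> 'i::linorder set"
    and \<alpha> :: "nat list"
    and a b :: "('a, 'i, 'r::semiring_1) nv"
  assumes "m \<ge> 1"
    and "\<forall>k\<in>{1..m}. finite (I k) \<and> I k \<noteq> {}"
    and "sorted_wrt (<) \<alpha>" and "set \<alpha> \<subseteq> {1..m}"
    and "inS I \<alpha> a" and "inS I \<alpha> b"
  shows "inS I \<alpha> (mulS \<alpha> a b)"
  using assms(5,6)
proof (induction \<alpha> arbitrary: a b)
  case Nil
  then show ?case by (cases a; cases b) auto
next
  case (Cons i \<alpha>)
  obtain Sa qa \<iota>a \<nu>a ra \<delta>a where a: "a = Strm Sa qa \<iota>a \<nu>a ra \<delta>a"
    using Cons.prems(1) by (cases a) auto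
  obtain Sb qb \<iota>b \<nu>b rb \<delta>b where b: "b = Strm Sb qb \<iota>b \<nu>b rb \<delta>b"
    using Cons.prems(2) by (cases b) auto
  have A: "qa \<in> Sa" "\<forall>s\<in>Sa. \<delta>a s \<in> Sa \<and> \<iota>a s \<in> I i \<and> inS I \<alpha> (\<nu>a s)" "simple_str \<delta>a \<iota>a ra qa"
    using Cons.prems(1) a by auto
  have B: "qb \<in> Sb" "\<forall>s\<in>Sb. \<delta>b s \<in> Sb \<and> \<iota>b s \<in> I i \<and> inS I \<alpha> (\<nu>b s)" "simple_str \<delta>b \<iota>b rb qb"
    using Cons.prems(2) b by auto
  have S: "simple_str
      (\<lambda>s. case s of Pair x y \<Rightarrow>
                 (if st_le \<iota>a ra x \<iota>b rb y then Pair (\<delta>a x) y else Pair x (\<delta>b y))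
               | Atom _ \<Rightarrow> undefined)
      (\<lambda>s. case s of Pair x y \<Rightarrow> max (\<iota>a x) (\<iota>b y) | Atom _ \<Rightarrow> undefined)
      (\<lambda>s. case s of Pair x y \<Rightarrow> ra x \<and> rb y \<and> \<iota>a x = \<iota>b y | Atom _ \<Rightarrow> undefined)
      (Pair qa qb)"
    by (rule prod_simple[OF _ _ _ A(3) B(3)]) simp_all
  show ?case
    unfolding a b mulS.simps prod_str_def
    using A B S[simplified max_def] Cons.IH by (auto simp: max_def)
qed

end
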